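(* Let $u_1,\dots,u_n\in\mathbb{R}^d$, $c_1,\dots,c_m\in\mathbb{R}^n_{\ge0}$, budgets $b_1,\dots,b_m$, and $\varepsilon>0$ with $b_j\ge\frac{d\|c_j\|_\infty}{\varepsilon}$ for all $1\le j\le m$. Let $x\in[0,1]^n$ be an optimal solution of the convex program: maximize $\log\det(\sum_{i=1}^n x(i)u_iu_i^\top)$ subject to $\langle c_j,x\rangle\le b_j$ ($1\le j\le m$), $0\le x(i)\le1$ ($1\le i\le n$). Let $X=\sum_i x(i)u_iu_i^\top$ (nonsingular) and $v_i=X^{-1/2}u_i$. Then $\|v_i\|_2^2\le\varepsilon$ for each $i$ with $0<x(i)<1$. *)

theory Defs
  imports "HOL-Analysis.Analysis"
begin

definition outer :: "real^'d \<Rightarrow> real^'d^'d" where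
  "outer u = (\<chi> a b. u $ a * u $ b)"

definition design_mat :: "('n::finite \<Rightarrow> real^'d) \<Rightarrow> real^'n \<Rightarrow> real^'d^'d" where
  "design_mat u x = (\<Sum>i\<in>UNIV. x $ i *\<^sub>R outer (u i))"

definition logdet :: "real^'d^'d \<Rightarrow> ereal" where
  "logdet A = (if det A > 0 then ereal (ln (det A)) else -\<infinity>)"

definition psd :: "real^'d^'d \<Rightarrow> bool" where
  "psd A \<longleftrightarrow> transpose A = A \<and> (\<forall>v. 0 \<le> v \<bullet> (A *v v))"

definition mat_sqrt :: "real^'d^'d \<Rightarrow> real^'d^'d" where
  "mat_sqrt A = (THE S. psd S \<and> S ** S = A)"

definition feasible :: "('m \<Rightarrow> real^'n) \<Rightarrow> ('m \<Rightarrow> real) \<Rightarrow> real^'n \<Rightarrow> bool" where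
  "feasible c b x \<longleftrightarrow> (\<forall>j. c j \<bullet> x \<le> b j) \<and> (\<forall>i. 0 \<le> x $ i \<and> x $ i \<le> 1)"

definition optimal :: "('n::finite \<Rightarrow> real^'d) \<Rightarrow> ('m \<Rightarrow> real^'n) \<Rightarrow> ('m \<Rightarrow> real) \<Rightarrow> real^'n \<Rightarrow> bool" where
  "optimal u c b x \<longleftrightarrow> feasible c b x \<and>
     (\<forall>y. feasible c b y \<longrightarrow> logdet (design_mat u y) \<le> logdet (design_mat u x))"

end

theory Submission
  imports Defs
begin

lemma transpose_minus': "transpose (A - B) = transpose A - transpose (B::real^'n^'m)"
  by (simp add: transpose_def vec_eq_iff)
lemma transpose_plus': "transpose (A + B) = transpose A + transpose (B::real^'n^'m)"
  by (simp add: transpose_def vec_eq_iff)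
lemma transpose_sum': "transpose (\<Sum>i\<in>I. f i) = (\<Sum>i\<in>I. transpose (f i :: real^'n^'m))"
  by (induction I rule: infinite_finite_induct) (auto simp: transpose_plus' transpose_def vec_eq_iff)

lemma sym_inner:
  fixes A :: "real^'d^'d"
  assumes "transpose A = A"
  shows "(A *v x) \<bullet> y = x \<bullet> (A *v y)"
proof -
  have "A *v x = x v* transpose A" by simp
  also have "\<dots> = x v* A" using assms by simp
  finally show ?thesis by (simp add: dot_lmul_matrix)
qed

lemma psd_kernel_sub:
  fixes M :: "real^'d^'d"
  assumes sym: "transpose M = M" and V: "subspace V" and MV: "\<And>w. w \<in> V \<Longrightarrow> M *v w \<in> V"
    and pos: "\<And>w. w \<in> V \<Longrightarrow> 0 \<le> w \<bullet> (M *v w)"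
    and v: "v \<in> V" and z: "v \<bullet> (M *v v) = 0"
  shows "M *v v = 0"
proof -
  let ?z = "M *v v"
  have zV: "?z \<in> V" using MV v by blast
  let ?a = "?z \<bullet> (M *v v)" and ?b = "?z \<bullet> (M *v ?z)"
  have key: "0 \<le> 2 * t * ?a + t^2 * ?b" for t :: real
  proof -
    have "v + t *\<^sub>R ?z \<in> V" using V v zV by (simp add: subspace_add subspace_mul)
    then have "0 \<le> (v + t *\<^sub>R ?z) \<bullet> (M *v (v + t *\<^sub>R ?z))" by (rule pos)
    also have "\<dots> = v \<bullet> (M *v v) + t * (v \<bullet> (M *v ?z)) + t * (?z \<bullet> (M *v v)) + t^2 * ?b"
      by (simp add: matrix_vector_right_distrib inner_add_left inner_add_right
          matrix_vector_mult_scaleR power2_eq_square algebra_simps)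
    also have "v \<bullet> (M *v ?z) = ?a" using sym_inner[OF sym, of v ?z] by (simp add: inner_commute)
    finally show ?thesis using z by simp
  qed
  have b0: "0 \<le> ?b" using pos zV by blast
  have "?a = 0"
  proof (rule ccontr)
    assume a: "?a \<noteq> 0"
    define t where "t = - ?a / (?b + 1)"
    have tb: "t * (?b + 1) = - ?a" using b0 unfolding t_def by (simp add: field_simps)
    have "0 \<le> 2 * t * ?a + t^2 * ?b" by (rule key)
    also have "\<dots> \<le> 2 * t * ?a + t^2 * (?b + 1)"
      by (simp add: algebra_simps)
    also have "t^2 * (?b + 1) = t * (- ?a)" unfolding tb[symmetric] by (simp add: power2_eq_square)
    also have "2 * t * ?a + t * (- ?a) = t * ?a" by simp
    also have "t * ?a = - (?a^2) / (?b + 1)"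
      unfolding t_def by (simp add: power2_eq_square)
    also have "\<dots> < 0" using a b0 by (simp add: field_simps)
    finally show False by simp
  qed
  then show ?thesis by simp
qed

lemma spectral_sub:
  fixes A :: "real^'d^'d"
  assumes sym: "transpose A = A"
  shows "subspace V \<Longrightarrow> (\<forall>w\<in>V. A *v w \<in> V) \<Longrightarrow>
    \<exists>B. finite B \<and> B \<subseteq> V \<and> (\<forall>b\<in>B. norm b = 1 \<and> A *v b = (b \<bullet> (A *v b)) *\<^sub>R b) \<and>
      (\<forall>b\<in>B. \<forall>b'\<in>B. b \<noteq> b' \<longrightarrow> b \<bullet> b' = 0) \<and> (\<forall>w\<in>V. w = (\<Sum>b\<in>B. (b \<bullet> w) *\<^sub>R b))"
proof (induction "dim V" arbitrary: V rule: less_induct)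
  case less
  note V = less.prems(1) and AV = less.prems(2)
  show ?case
  proof (cases "V = {0}")
    case True
    then show ?thesis by (intro exI[of _ "{}"]) auto
  next
    case False
    then obtain v0 where v0: "v0 \<in> V" "v0 \<noteq> 0" using V subspace_0 by blast
    let ?K = "V \<inter> sphere 0 1"
    let ?q = "\<lambda>w. w \<bullet> (A *v w)"
    have cK: "compact ?K"
      by (metis Int_commute V closed_subspace compact_Int_closed compact_sphere)
    have nK: "?K \<noteq> {}"
    proof -
      have "(inverse (norm v0)) *\<^sub>R v0 \<in> ?K" using v0 V by (simp add: subspace_mul)
      then show ?thesis by blast
    qed
    have cq: "continuous_on ?K ?q"
      by (intro continuous_intros linear_continuous_on matrix_vector_mul_linear)
    obtain v where v: "v \<in> ?K" and vmax: "\<And>y. y \<in> ?K \<Longrightarrow> ?q y \<le> ?q v"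
      using continuous_attains_sup[OF cK nK cq] by blast
    define l where "l = ?q v"
    have vV: "v \<in> V" and nv: "norm v = 1" using v by auto
    have vv: "v \<bullet> v = 1" using nv by (simp add: dot_square_norm)
    define M where "M = l *\<^sub>R mat 1 - A"
    have Mv: "M *v w = l *\<^sub>R w - A *v w" for w
      by (simp add: M_def matrix_vector_mult_diff_rdistrib scaleR_matrix_vector_assoc[symmetric])
    have symM: "transpose M = M" using sym by (simp add: M_def transpose_minus' transpose_scalar)
    have posM: "0 \<le> w \<bullet> (M *v w)" if "w \<in> V" for w
    proof (cases "w = 0")
      case True then show ?thesis by simp
    next
      case False
      let ?w = "inverse (norm w) *\<^sub>R w"
      have "?w \<in> ?K" using that V False by (simp add: subspace_mul)
      then have "?q ?w \<le> l" using vmax l_def by blast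
      then have "inverse (norm w) ^ 2 * ?q w \<le> l"
        by (simp add: matrix_vector_mult_scaleR power2_eq_square)
      then have "?q w \<le> l * norm w ^ 2" using False
        by (simp add: field_simps)
      then show ?thesis using False by (simp add: Mv inner_diff_right dot_square_norm)
    qed
    have "v \<bullet> (M *v v) = 0" by (simp add: Mv inner_diff_right vv l_def)
    then have "M *v v = 0"
      using psd_kernel_sub[OF symM V _ posM vV] V AV Mv
      by (simp add: subspace_diff subspace_mul)
    then have Av: "A *v v = l *\<^sub>R v" by (simp add: Mv)
    define W where "W = {w \<in> V. v \<bullet> w = 0}"
    have W: "subspace W" using V unfolding W_def subspace_def
      by (auto simp: inner_add_right)
    have AW: "\<forall>w\<in>W. A *v w \<in> W"
    proof
      fix w assume "w \<in> W"
      then have "w \<in> V" "v \<bullet> w = 0" by (auto simp: W_def)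
      moreover have "v \<bullet> (A *v w) = (A *v v) \<bullet> w" using sym_inner[OF sym, of v w] by simp
      ultimately show "A *v w \<in> W" using AV by (simp add: W_def Av)
    qed
    have "dim W < dim V"
    proof (rule dim_psubset)
      have "v \<notin> W" using vv by (simp add: W_def)
      moreover have "W \<subseteq> V" by (auto simp: W_def)
      ultimately have "W \<subset> V" using vV by blast
      then show "span W \<subset> span V" using W V by (simp add: span_eq_iff[THEN iffD2])
    qed
    from less.hyps[OF this W AW] obtain B where B: "finite B" "B \<subseteq> W"
      "\<forall>b\<in>B. norm b = 1 \<and> A *v b = (b \<bullet> (A *v b)) *\<^sub>R b"
      "\<forall>b\<in>B. \<forall>b'\<in>B. b \<noteq> b' \<longrightarrow> b \<bullet> b' = 0"
      "\<forall>w\<in>W. w = (\<Sum>b\<in>B. (b \<bullet> w) *\<^sub>R b)" by blast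
    have vB: "v \<notin> B" using B(2) vv by (auto simp: W_def)
    have Bv: "b \<bullet> v = 0" if "b \<in> B" for b using that B(2) by (auto simp: W_def inner_commute)
    show ?thesis
    proof (intro exI[of _ "insert v B"] conjI ballI impI)
      show "finite (insert v B)" using B by simp
      show "insert v B \<subseteq> V" using B(2) vV by (auto simp: W_def)
    next
      fix b assume "b \<in> insert v B"
      then show "norm b = 1" using B(3) nv by auto
    next
      fix b assume "b \<in> insert v B"
      then show "A *v b = (b \<bullet> (A *v b)) *\<^sub>R b" using B(3) Av vv by (auto simp: l_def)
    next
      fix b b' assume "b \<in> insert v B" "b' \<in> insert v B" "b \<noteq> b'"
      then show "b \<bullet> b' = 0" using B(4) Bv by (auto simp: inner_commute)
    next
      fix w assume wV: "w \<in> V"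
      let ?w' = "w - (v \<bullet> w) *\<^sub>R v"
      have "?w' \<in> W" using wV vV V vv by (simp add: W_def subspace_diff subspace_mul inner_diff_right)
      then have "?w' = (\<Sum>b\<in>B. (b \<bullet> ?w') *\<^sub>R b)" using B(5) by blast
      also have "\<dots> = (\<Sum>b\<in>B. (b \<bullet> w) *\<^sub>R b)"
        by (intro sum.cong refl) (simp add: inner_diff_right Bv)
      finally have "w = (v \<bullet> w) *\<^sub>R v + (\<Sum>b\<in>B. (b \<bullet> w) *\<^sub>R b)" by (simp add: algebra_simps)
      then show "w = (\<Sum>b\<in>insert v B. (b \<bullet> w) *\<^sub>R b)" using B(1) vB by simp
    qed
  qed
qed

lemma spectral_full:
  fixes A :: "real^'d^'d"
  assumes sym: "transpose A = A"
  shows "\<exists>B. finite B \<and> (\<forall>b\<in>B. norm b = 1 \<and> A *v b = (b \<bullet> (A *v b)) *\<^sub>R b) \<and>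
      (\<forall>b\<in>B. \<forall>b'\<in>B. b \<noteq> b' \<longrightarrow> b \<bullet> b' = 0) \<and> (\<forall>w. w = (\<Sum>b\<in>B. (b \<bullet> w) *\<^sub>R b))"
  using spectral_sub[OF sym, of UNIV] by auto

lemma outer_mult: "outer b *v w = (b \<bullet> w) *\<^sub>R (b::real^'d)"
  by (simp add: outer_def matrix_vector_mult_def inner_vec_def vec_eq_iff sum_distrib_left algebra_simps)

lemma outer_transpose: "transpose (outer b) = outer (b::real^'d)"
  by (simp add: outer_def transpose_def vec_eq_iff mult.commute)

lemma sum_mult_vec: "(\<Sum>i\<in>I. f i) *v w = (\<Sum>i\<in>I. f i *v (w::real^'d))"
  for f :: "'a \<Rightarrow> real^'d^'e"
  by (induction I rule: infinite_finite_induct) (auto simp: matrix_vector_mult_add_rdistrib)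

lemma mult_vec_sum: "A *v (\<Sum>i\<in>I. f i) = (\<Sum>i\<in>I. A *v (f i :: real^'d))"
  for A :: "real^'d^'e"
  by (induction I rule: infinite_finite_induct) (auto simp: matrix_vector_right_distrib)

lemma mat_eq_by_vec: "(\<And>w. A *v w = B *v w) \<Longrightarrow> A = (B::real^'d^'e)"
  using matrix_eq by blast

lemma orth_sum:
  assumes "finite B" "b \<in> B" "\<forall>b\<in>B. \<forall>b'\<in>B. b \<noteq> b' \<longrightarrow> b \<bullet> b' = 0" "norm b = 1"
  shows "(\<Sum>b'\<in>B. c b' * (b \<bullet> b')) = c b"
proof -
  have "(\<Sum>b'\<in>B. c b' * (b \<bullet> b')) = c b * (b \<bullet> b) + (\<Sum>b'\<in>B - {b}. c b' * (b \<bullet> b'))"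
    using assms(1,2) by (simp add: sum.remove)
  also have "(\<Sum>b'\<in>B - {b}. c b' * (b \<bullet> b')) = 0" using assms(2,3) by (intro sum.neutral) auto
  also have "b \<bullet> b = 1" using assms(4) by (simp add: dot_square_norm)
  finally show ?thesis by simp
qed

lemma psd_sqrt_exists:
  fixes A :: "real^'d^'d"
  assumes "psd A"
  shows "\<exists>S. psd S \<and> S ** S = A"
proof -
  have sym: "transpose A = A" and pos: "\<And>v. 0 \<le> v \<bullet> (A *v v)" using assms by (auto simp: psd_def)
  obtain B where B: "finite B" "\<forall>b\<in>B. norm b = 1 \<and> A *v b = (b \<bullet> (A *v b)) *\<^sub>R b"
      "\<forall>b\<in>B. \<forall>b'\<in>B. b \<noteq> b' \<longrightarrow> b \<bullet> b' = 0" "\<forall>w. w = (\<Sum>b\<in>B. (b \<bullet> w) *\<^sub>R b)"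
    using spectral_full[OF sym] by blast
  define l where "l b = b \<bullet> (A *v b)" for b
  have l0: "0 \<le> l b" for b using pos by (simp add: l_def)
  define S where "S = (\<Sum>b\<in>B. sqrt (l b) *\<^sub>R outer b)"
  have Sw: "S *v w = (\<Sum>b\<in>B. (sqrt (l b) * (b \<bullet> w)) *\<^sub>R b)" for w
    by (simp add: S_def sum_mult_vec scaleR_matrix_vector_assoc[symmetric] outer_mult)
  have bSw: "b \<bullet> (S *v w) = sqrt (l b) * (b \<bullet> w)" if "b \<in> B" for b w
  proof -
    have "b \<bullet> (S *v w) = (\<Sum>b'\<in>B. (sqrt (l b') * (b' \<bullet> w)) * (b \<bullet> b'))"
      by (simp add: Sw inner_sum_right)
    also have "\<dots> = sqrt (l b) * (b \<bullet> w)"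
      using orth_sum[OF B(1) that B(3)] B(2) that by simp
    finally show ?thesis .
  qed
  have "S *v (S *v w) = A *v w" for w
  proof -
    have "S *v (S *v w) = (\<Sum>b\<in>B. (sqrt (l b) * (b \<bullet> (S *v w))) *\<^sub>R b)" by (rule Sw)
    also have "\<dots> = (\<Sum>b\<in>B. (l b * (b \<bullet> w)) *\<^sub>R b)"
      by (intro sum.cong refl) (simp add: bSw l0 mult.assoc[symmetric])
    also have "\<dots> = A *v (\<Sum>b\<in>B. (b \<bullet> w) *\<^sub>R b)"
      by (simp add: mult_vec_sum matrix_vector_mult_scaleR l_def) (rule sum.cong[OF refl], metis (no_types) B(2) scaleR_scaleR mult.commute)
    finally show ?thesis using B(4) by metis
  qed
  then have SS: "S ** S = A" by (intro mat_eq_by_vec) (simp add: matrix_vector_mul_assoc[symmetric])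
  have "transpose S = S"
    by (simp add: S_def transpose_sum' transpose_scalar outer_transpose)
  moreover have "0 \<le> v \<bullet> (S *v v)" for v
  proof -
    have "v \<bullet> (S *v v) = (\<Sum>b\<in>B. sqrt (l b) * (b \<bullet> v) * (v \<bullet> b))"
      by (simp add: Sw inner_sum_right)
    also have "\<dots> \<ge> 0" using l0 by (intro sum_nonneg) (simp add: inner_commute mult.assoc)
    finally show ?thesis .
  qed
  ultimately show ?thesis using SS by (auto simp: psd_def)
qed

lemma psd_kernel:
  fixes M :: "real^'d^'d"
  assumes "psd M" "v \<bullet> (M *v v) = 0"
  shows "M *v v = 0"
  using psd_kernel_sub[of M UNIV v] assms by (auto simp: psd_def)

lemma psd_sqrt_unique:
  fixes S T :: "real^'d^'d"
  assumes S: "psd S" and T: "psd T" and eq: "S ** S = T ** T"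
  shows "S = T"
proof -
  define D where "D = S - T"
  have symS: "transpose S = S" and symT: "transpose T = T" using S T by (auto simp: psd_def)
  have symD: "transpose D = D" using symS symT by (simp add: D_def transpose_minus')
  obtain B where B: "finite B" "\<forall>b\<in>B. norm b = 1 \<and> D *v b = (b \<bullet> (D *v b)) *\<^sub>R b"
      "\<forall>w. w = (\<Sum>b\<in>B. (b \<bullet> w) *\<^sub>R b)"
    using spectral_full[OF symD] by blast
  have Db: "D *v b = 0" if bB: "b \<in> B" for b
  proof -
    define m where "m = b \<bullet> (D *v b)"
    have Dbm: "D *v b = m *\<^sub>R b" and nb: "norm b = 1" using B(2) bB by (auto simp: m_def)
    have "S *v (D *v b) + D *v (T *v b) = S *v (S *v b) - T *v (T *v b)"
      by (simp add: D_def matrix_vector_mult_diff_rdistrib matrix_vector_mult_diff_distrib)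
    also have "\<dots> = 0" using eq by (simp add: matrix_vector_mul_assoc)
    finally have "b \<bullet> (S *v (D *v b)) + b \<bullet> (D *v (T *v b)) = 0"
      by (metis inner_add_right inner_zero_right)
    moreover have "b \<bullet> (D *v (T *v b)) = (D *v b) \<bullet> (T *v b)"
      using sym_inner[OF symD, of b "T *v b"] by simp
    ultimately have "m * (b \<bullet> (S *v b) + b \<bullet> (T *v b)) = 0"
      using Dbm by (simp add: matrix_vector_mult_scaleR algebra_simps inner_commute)
    moreover have "0 \<le> b \<bullet> (S *v b)" "0 \<le> b \<bullet> (T *v b)" using S T by (auto simp: psd_def)
    ultimately have "m = 0 \<or> (b \<bullet> (S *v b) = 0 \<and> b \<bullet> (T *v b) = 0)" by auto
    then show ?thesis
    proof
      assume "m = 0" then show ?thesis using Dbm by simp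
    next
      assume "b \<bullet> (S *v b) = 0 \<and> b \<bullet> (T *v b) = 0"
      then have "S *v b = 0" "T *v b = 0" using psd_kernel S T by blast+
      then show ?thesis by (simp add: D_def matrix_vector_mult_diff_rdistrib)
    qed
  qed
  have "D *v w = 0 *v w" for w
  proof -
    have "D *v w = D *v (\<Sum>b\<in>B. (b \<bullet> w) *\<^sub>R b)" using B(3) by metis
    also have "\<dots> = 0" by (simp add: mult_vec_sum matrix_vector_mult_scaleR Db)
    finally show ?thesis by simp
  qed
  then have "D = 0" by (rule mat_eq_by_vec)
  then show ?thesis by (simp add: D_def)
qed

lemma mat_sqrt:
  fixes A :: "real^'d^'d"
  assumes "psd A"
  shows "psd (mat_sqrt A) \<and> mat_sqrt A ** mat_sqrt A = A"
proof -
  have "\<exists>!S. psd S \<and> S ** S = A"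
    using psd_sqrt_exists[OF assms] psd_sqrt_unique by metis
  then show ?thesis unfolding mat_sqrt_def by (rule theI')
qed


definition rank1 :: "real^'d \<Rightarrow> real^'d \<Rightarrow> real^'d^'d" where
  "rank1 a b = (\<chi> i j. a$i * b$j)"

lemma rank1_mult_left: "M ** rank1 a b = rank1 (M *v a) b"
  by (simp add: rank1_def matrix_matrix_mult_def matrix_vector_mult_def vec_eq_iff sum_distrib_right mult.assoc)

lemma rank1_mult_right: "rank1 a b ** M = rank1 a (transpose M *v b)"
  by (simp add: rank1_def matrix_matrix_mult_def matrix_vector_mult_def transpose_def vec_eq_iff
      sum_distrib_left algebra_simps)

lemma matrix_add_rdistrib': "((B + C) ** A) = (B ** A) + (C ** (A::real^'d^'d))"
  by (vector matrix_matrix_mult_def sum.distrib[symmetric] field_simps)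

lemma det_scaleR: "det (k *\<^sub>R (A::real^'d^'d)) = k ^ CARD('d) * det A"
  by (simp add: det_def sum_distrib_left prod.distrib algebra_simps)

lemma det_I_rank1: "det (mat 1 + rank1 c b) = 1 + b \<bullet> (c::real^'d)"
proof (cases "c = 0")
  case True
  then have "rank1 c b = 0" by (simp add: rank1_def vec_eq_iff)
  then show ?thesis using True by simp
next
  case False
  then obtain k where ck: "c$k \<noteq> 0" by (auto simp: vec_eq_iff)
  define E :: "real^'d^'d" where "E = (\<chi> i j. if j = k then c$i else mat 1 $i$j)"
  have dE: "det E = c$k"
    using cramer_lemma[where A="mat 1 :: real^'d^'d" and k=k and x=c] unfolding E_def matrix_vector_mul_lid det_I by simp
  define w where "w = transpose E *v b"
  have Ek: "E *v axis k 1 = c"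
  proof -
    have "(E *v axis k 1) $ i = E $ i $ k" for i
      by (metis cart_eq_inner_axis matrix_vector_mul_component)
    then show ?thesis by (simp add: E_def vec_eq_iff)
  qed
  have wk: "w$k = b \<bullet> c"
    by (simp add: w_def E_def matrix_vector_mult_def transpose_def inner_vec_def mult.commute)
  have "(mat 1 + rank1 c b) ** E = E ** (mat 1 + rank1 (axis k 1) w)"
    by (simp add: matrix_add_ldistrib matrix_add_rdistrib' rank1_mult_left rank1_mult_right Ek w_def)
  then have "det (mat 1 + rank1 c b) * det E = det E * det (mat 1 + rank1 (axis k 1) w)"
    by (metis det_mul)
  moreover have "det (mat 1 + rank1 (axis k 1) w) = 1 + w$k"
  proof -
    have "transpose (mat 1 + rank1 (axis k 1) w) = (\<chi> i j. if j = k then (axis k 1 + w)$i else (mat 1::real^'d^'d)$i$j)"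
      by (simp add: transpose_def rank1_def vec_eq_iff mat_def axis_def)
    then have "det (transpose (mat 1 + rank1 (axis k 1) w)) = (axis k 1 + w)$k * det (mat 1::real^'d^'d)"
      using cramer_lemma[where A="mat 1 :: real^'d^'d" and k=k and x="axis k 1 + w"]
      unfolding matrix_vector_mul_lid by simp
    then show ?thesis by simp
  qed
  ultimately show ?thesis using dE ck wk by simp
qed


lemma real_ineq:
  fixes d :: nat and \<epsilon> g T0 :: real
  assumes d: "d \<ge> 1" and e: "\<epsilon> > 0" and g: "g > \<epsilon>" and T0: "T0 > 0"
  shows "\<exists>t>0. t \<le> T0 \<and> t * (\<epsilon> / d) < 1 \<and>
           (1 - t * (\<epsilon> / d))^d * (1 + (t / (1 - t * (\<epsilon> / d))) * g) > 1"
proof -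
  define a where "a = \<epsilon> / d"
  have a0: "a > 0" using d e by (simp add: a_def)
  have da: "real d * a = \<epsilon>" using d by (simp add: a_def)
  have ae: "a \<le> \<epsilon>" using d e by (simp add: a_def field_simps)
  define K where "K = real (d - 1) * a * (g - a)"
  have K0: "K \<ge> 0" using a0 ae g by (simp add: K_def)
  define t where "t = min T0 (min (1 / (2 * a)) ((g - \<epsilon>) / (K + 1)))"
  have t0: "t > 0" using T0 a0 g K0 by (simp add: t_def)
  have tT: "t \<le> T0" by (simp add: t_def)
  have ta: "t * a \<le> 1/2"
  proof -
    have "t \<le> 1 / (2 * a)" by (simp add: t_def)
    then show ?thesis using a0 by (simp add: field_simps)
  qed
  define s where "s = t * a"
  have s1: "s < 1" "0 \<le> s" using ta t0 a0 by (auto simp: s_def)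
  have tK: "t * K < g - \<epsilon>"
  proof -
    have "t \<le> (g - \<epsilon>) / (K + 1)" by (simp add: t_def)
    then have "t * K \<le> (g - \<epsilon>) / (K + 1) * K" using K0 by (rule mult_right_mono)
    also have "\<dots> < g - \<epsilon>" using K0 g by (simp add: field_simps)
    finally show ?thesis .
  qed
  have eq1: "(1 - s)^d * (1 + (t / (1 - s)) * g) = (1 - s)^(d - 1) * (1 - s + t * g)"
  proof -
    have "(1 - s)^d = (1 - s)^(d - 1) * (1 - s)" using d
      by (metis Suc_diff_1 less_le_trans zero_less_one power_Suc2 Suc_le_eq)
    moreover have "(1 - s) * (1 + (t / (1 - s)) * g) = 1 - s + t * g" using s1 by (simp add: field_simps)
    ultimately show ?thesis by (simp add: mult.assoc)
  qed
  have bern: "1 - real (d - 1) * s \<le> (1 - s)^(d - 1)"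
    using Bernoulli_inequality[of "- s" "d - 1"] s1 by simp
  have pos: "0 \<le> 1 - s + t * g" using s1 t0 g e by simp
  have "(1 - real (d - 1) * s) * (1 - s + t * g) \<le> (1 - s)^(d - 1) * (1 - s + t * g)"
    using bern pos by (rule mult_right_mono)
  moreover have "(1 - real (d - 1) * s) * (1 - s + t * g) = 1 + t * ((g - \<epsilon>) - t * K)"
  proof -
    have "real (d - 1) = real d - 1" using d by simp
    then show ?thesis unfolding s_def K_def da[symmetric] by (simp add: algebra_simps)
  qed
  moreover have "t * ((g - \<epsilon>) - t * K) > 0" using t0 tK by simp
  ultimately have "(1 - s)^d * (1 + (t / (1 - s)) * g) > 1" using eq1 by linarith
  then show ?thesis using t0 tT s1 unfolding s_def a_def by blast
qed


lemma design_transpose: "transpose (design_mat u x) = design_mat u x"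
  by (simp add: design_mat_def transpose_sum' transpose_scalar outer_transpose)

lemma design_quad: "v \<bullet> (design_mat u x *v v) = (\<Sum>i\<in>UNIV. x$i * (u i \<bullet> v)^2)"
  by (simp add: design_mat_def sum_mult_vec scaleR_matrix_vector_assoc[symmetric] outer_mult
      inner_sum_right power2_eq_square inner_commute mult.assoc)

theorem lemma4p12:
  fixes u :: "'n::finite \<Rightarrow> real^'d"
    and c :: "'m::finite \<Rightarrow> real^'n"
    and b :: "'m \<Rightarrow> real"
    and \<epsilon> :: real
    and x :: "real^'n"
  assumes c_nonneg: "\<And>j i. 0 \<le> c j $ i"
    and eps_pos: "\<epsilon> > 0"
    and budgets: "\<And>j. b j \<ge> real CARD('d) * infnorm (c j) / \<epsilon>"
    and opt: "optimal u c b x"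
    and nonsing: "invertible (design_mat u x)"
  shows "\<forall>i. 0 < x $ i \<and> x $ i < 1 \<longrightarrow>
           (norm (mat_sqrt (matrix_inv (design_mat u x)) *v u i))\<^sup>2 \<le> \<epsilon>"
proof (intro allI impI)
  fix i assume xi: "0 < x $ i \<and> x $ i < 1"
  define X where "X = design_mat u x"
  define Xi where "Xi = matrix_inv X"
  have feas: "feasible c b x" using opt by (simp add: optimal_def)
  have x01: "0 \<le> x$k" "x$k \<le> 1" for k using feas by (auto simp: feasible_def)
  have cx: "c j \<bullet> x \<le> b j" for j using feas by (auto simp: feasible_def)
  have inv: "X ** Xi = mat 1 \<and> Xi ** X = mat 1"
    using nonsing unfolding X_def Xi_def invertible_def matrix_inv_def by (rule someI_ex)
  have symX: "transpose X = X" by (simp add: X_def design_transpose)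
  have psdX: "psd X" unfolding psd_def
    using symX x01 by (auto simp: X_def design_quad intro!: sum_nonneg)
  have symXi: "transpose Xi = Xi"
  proof -
    have "transpose Xi ** X = mat 1"
      using inv symX by (metis matrix_transpose_mul transpose_mat)
    then have "transpose Xi = transpose Xi ** (X ** Xi)" using inv by simp
    also have "\<dots> = Xi" using \<open>transpose Xi ** X = mat 1\<close> by (simp add: matrix_mul_assoc)
    finally show ?thesis .
  qed
  have XXi: "X *v (Xi *v w) = w" for w using inv by (simp add: matrix_vector_mul_assoc)
  have psdXi: "psd Xi" unfolding psd_def
  proof (intro conjI allI symXi)
    fix v
    have "v \<bullet> (Xi *v v) = (X *v (Xi *v v)) \<bullet> (Xi *v v)" by (simp add: XXi)
    also have "\<dots> \<ge> 0" using psdX by (simp add: psd_def inner_commute)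
    finally show "0 \<le> v \<bullet> (Xi *v v)" .
  qed
  define S where "S = mat_sqrt Xi"
  have S: "psd S" "S ** S = Xi" using mat_sqrt[OF psdXi] by (auto simp: S_def)
  define g where "g = u i \<bullet> (Xi *v u i)"
  have normg: "(norm (S *v u i))\<^sup>2 = g"
  proof -
    have "(norm (S *v u i))\<^sup>2 = (S *v u i) \<bullet> (S *v u i)" by (simp add: dot_square_norm)
    also have "\<dots> = u i \<bullet> (S *v (S *v u i))" using sym_inner[of S] S(1) by (simp add: psd_def)
    also have "\<dots> = g" using S(2) by (simp add: matrix_vector_mul_assoc g_def)
    finally show ?thesis .
  qed
  have detX: "det X > 0"
  proof -
    have "det X * det Xi = 1" using inv by (metis det_I det_mul)
    moreover have "det Xi = det S * det S" using S(2) by (metis det_mul)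
    ultimately have "det S \<noteq> 0" by auto
    then have "det Xi > 0" using \<open>det Xi = det S * det S\<close>
      by (auto simp: zero_less_mult_iff linorder_neq_iff)
    with \<open>det X * det Xi = 1\<close> show ?thesis by (metis zero_less_mult_pos2 zero_less_one)
  qed
  show "(norm (mat_sqrt (matrix_inv (design_mat u x)) *v u i))\<^sup>2 \<le> \<epsilon>"
  proof (rule ccontr)
    assume "\<not> ?thesis"
    then have gbig: "g > \<epsilon>" using normg by (simp add: S_def Xi_def X_def)
    have d1: "CARD('d) \<ge> 1" by (simp add: Suc_le_eq)
    obtain t where t: "t > 0" "t \<le> 1 - x$i" "t * (\<epsilon> / CARD('d)) < 1"
      "(1 - t * (\<epsilon> / CARD('d)))^CARD('d) * (1 + (t / (1 - t * (\<epsilon> / CARD('d)))) * g) > 1"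
      using real_ineq[OF d1 eps_pos gbig, of "1 - x$i"] xi by auto
    define s where "s = t * (\<epsilon> / CARD('d))"
    have s: "0 \<le> s" "s < 1" using t eps_pos by (auto simp: s_def)
    define y where "y = (1 - s) *\<^sub>R x + t *\<^sub>R axis i 1"
    have yk: "y$k = (1 - s) * x$k + (if k = i then t else 0)" for k
      by (simp add: y_def axis_def)
    have feasy: "feasible c b y" unfolding feasible_def
    proof (intro conjI allI)
      fix j
      have cji: "c j $ i \<le> infnorm (c j)"
        using component_le_infnorm_cart[of "c j" i] by simp
      have "s * b j \<ge> t * infnorm (c j)"
      proof -
        have "s * b j \<ge> s * (real CARD('d) * infnorm (c j) / \<epsilon>)"
          by (rule mult_left_mono[OF budgets[of j] s(1)])
        also have "s * (real CARD('d) * infnorm (c j) / \<epsilon>) = t * infnorm (c j)"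
          using eps_pos by (simp add: s_def field_simps)
        finally show ?thesis .
      qed
      have "c j \<bullet> y = (1 - s) * (c j \<bullet> x) + t * c j $ i"
        by (simp add: y_def inner_add_right inner_axis)
      also have "\<dots> \<le> (1 - s) * b j + s * b j"
        using cx[of j] s cji \<open>s * b j \<ge> t * infnorm (c j)\<close> t(1)
        by (intro add_mono mult_left_mono) (auto intro: order_trans[OF mult_left_mono[OF cji]])
      also have "\<dots> = b j" by (simp add: algebra_simps)
      finally show "c j \<bullet> y \<le> b j" .
    next
      fix k
      show "0 \<le> y$k" using x01[of k] s t by (simp add: yk)
      show "y$k \<le> 1"
      proof (cases "k = i")
        case True
        have "0 \<le> s * x$i" using s x01[of i] by simp
        then have "(1 - s) * x$i \<le> x$i" by (simp add: algebra_simps)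
        then show ?thesis using True t by (simp add: yk)
      next
        case False
        have "0 \<le> s * x$k" using s x01[of k] by simp
        then have "(1 - s) * x$k \<le> 1" using x01[of k] by (simp add: algebra_simps)
        then show ?thesis using False by (simp add: yk)
      qed
    qed
    have Y: "design_mat u y = (1 - s) *\<^sub>R X + t *\<^sub>R outer (u i)"
    proof -
      have "design_mat u y = (\<Sum>k\<in>UNIV. ((1 - s) * x$k) *\<^sub>R outer (u k) + (if k = i then t else 0) *\<^sub>R outer (u k))"
        by (simp add: design_mat_def yk scaleR_add_left)
      also have "\<dots> = (1 - s) *\<^sub>R X + t *\<^sub>R outer (u i)"
      proof -
        have "(\<Sum>k\<in>UNIV. (if k = i then t else 0) *\<^sub>R outer (u k)) = t *\<^sub>R outer (u i)"
        proof -
          have "\<And>k. (if k = i then t else 0) *\<^sub>R outer (u k) = (if k = i then t *\<^sub>R outer (u i) else 0)"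
            by simp
          then show ?thesis by (simp only: sum.delta finite UNIV_I if_True)
        qed
        then show ?thesis
          by (simp add: sum.distrib X_def design_mat_def scaleR_sum_right)
      qed
      finally show ?thesis .
    qed
    define r where "r = t / (1 - s)"
    have "X ** rank1 (Xi *v u i) (r *\<^sub>R u i) = r *\<^sub>R outer (u i)"
      unfolding rank1_mult_left XXi by (simp add: rank1_def outer_def vec_eq_iff mult.assoc mult.left_commute)
    then have "(1 - s) *\<^sub>R X + t *\<^sub>R outer (u i) = (1 - s) *\<^sub>R (X ** (mat 1 + rank1 (Xi *v u i) (r *\<^sub>R u i)))"
      using s by (simp add: matrix_add_ldistrib r_def scaleR_add_right)
    then have "det (design_mat u y) = (1 - s)^CARD('d) * (det X * (1 + r * g))"
      by (simp add: Y det_scaleR det_mul det_I_rank1 g_def)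
    also have "\<dots> = det X * ((1 - s)^CARD('d) * (1 + r * g))" by simp
    also have "\<dots> > det X * 1"
      using detX t(4) by (intro mult_strict_left_mono) (auto simp: r_def s_def mult.commute)
    finally have dY: "det (design_mat u y) > det X" by simp
    have "logdet (design_mat u y) \<le> logdet X" using opt feasy by (simp add: optimal_def X_def)
    moreover have "logdet (design_mat u y) > logdet X"
      using dY detX by (simp add: logdet_def)
    ultimately show False by simp
  qed
qed

end
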